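(* Let $I$ be a set of players with $|I|\ge2$ and $S$ a set of states of nature with $|S|\ge2$. Then there is no weak-universal $\infty$-type space on $S$ for player set $I$, and there is no weak-universal $*$-type space on $S$ for player set $I$.
   Context: An $\infty$-field on a nonempty set $M$ is a field of subsets closed under arbitrary intersections. For an $\infty$-field $\Sigma$ on $M$, $\Delta^\infty(M,\Sigma)$ is the set of finitely additive probability measures on $(M,\Sigma)$, endowed with the $\infty$-field generated by the sets $\{\mu:\mu(E)\ge p\}$, $E\in\Sigma$, $p\in[0,1]$. An $\infty$-type space on $S$ for $I$ is $\langle M,\Sigma,(T_i)_{i\in I},\theta\rangle$ with $M$ nonempty, $\Sigma$ an $\infty$-field on $M$, each $T_i:M\to\Delta^\infty(M,\Sigma)$ measurable such that for all $m\in M$, $A\in\Sigma$: $\{m':T_i(m')=T_i(m)\}\subseteq A$ implies $T_i(m)(A)=1$; and $\theta:M\to S$ $\Sigma$–$\mathrm{Pow}(S)$-measurable. A $*$-type space on $S$ for $I$ is $\langle M,(T_i)_{i\in I},\theta\rangle$ with $M$ nonempty, each $T_i$ a function from $M$ to finitely additive probability measures on $(M,\mathrm{Pow}(M))$ with $T_i(m)(\{m':T_i(m')=T_i(m)\})=1$, and $\theta:M\to S$ any function. A type morphism from $\langle M',\Sigma',(T'_i),\theta'\rangle$ to $\langle M,\Sigma,(T_i),\theta\rangle$ (for $*$-type spaces take $\Sigma=\mathrm{Pow}(M)$) is a $\Sigma'$–$\Sigma$-measurable $f:M'\to M$ with $\theta'(m')=\theta(f(m'))$ and $T_i(f(m'))(E)=T'_i(m')(f^{-1}(E))$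 for all $m'$, $E\in\Sigma$, $i\in I$. An $\infty$-type space (resp. $*$-type space) is weak-universal if every $\infty$-type space (resp. $*$-type space) on $S$ for $I$ admits some type morphism into it. *)

theory Defs
  imports Complex_Main
begin

definition inf_field :: "'a set \<Rightarrow> 'a set set \<Rightarrow> bool" where
  "inf_field M \<Sigma> \<longleftrightarrow>
     \<Sigma> \<subseteq> Pow M \<and> M \<in> \<Sigma> \<and>
     (\<forall>A\<in>\<Sigma>. M - A \<in> \<Sigma>) \<and>
     (\<forall>A\<in>\<Sigma>. \<forall>B\<in>\<Sigma>. A \<union> B \<in> \<Sigma>) \<and>
     (\<forall>F. F \<subseteq> \<Sigma> \<longrightarrow> F \<noteq> {} \<longrightarrow> \<Inter>F \<in> \<Sigma>)"

definition gen_inf_field :: "'a set \<Rightarrow> 'a set set \<Rightarrow> 'a set set" where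
  "gen_inf_field X G = \<Inter>{\<Sigma>. inf_field X \<Sigma> \<and> G \<subseteq> \<Sigma>}"

text \<open>Finitely additive probability measure on (M, Sigma), represented as a function
  on all sets which is normalised to 0 outside Sigma (so that equality of measures
  is equality of functions).\<close>
definition fa_prob :: "'a set \<Rightarrow> 'a set set \<Rightarrow> ('a set \<Rightarrow> real) \<Rightarrow> bool" where
  "fa_prob M \<Sigma> \<mu> \<longleftrightarrow>
     (\<forall>E\<in>\<Sigma>. 0 \<le> \<mu> E) \<and> \<mu> M = 1 \<and>
     (\<forall>E\<in>\<Sigma>. \<forall>F\<in>\<Sigma>. E \<inter> F = {} \<longrightarrow> \<mu> (E \<union> F) = \<mu> E + \<mu> F) \<and>
     (\<forall>E. E \<notin> \<Sigma> \<longrightarrow> \<mu> E = 0)"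

definition Delta :: "'a set \<Rightarrow> 'a set set \<Rightarrow> ('a set \<Rightarrow> real) set" where
  "Delta M \<Sigma> = {\<mu>. fa_prob M \<Sigma> \<mu>}"

definition Delta_field :: "'a set \<Rightarrow> 'a set set \<Rightarrow> ('a set \<Rightarrow> real) set set" where
  "Delta_field M \<Sigma> = gen_inf_field (Delta M \<Sigma>)
     {{\<mu>\<in>Delta M \<Sigma>. \<mu> E \<ge> p} | E p. E \<in> \<Sigma> \<and> 0 \<le> p \<and> p \<le> 1}"

definition measurable_map ::
  "'a set \<Rightarrow> 'a set set \<Rightarrow> 'b set \<Rightarrow> 'b set set \<Rightarrow> ('a \<Rightarrow> 'b) \<Rightarrow> bool" where
  "measurable_map M \<Sigma> N \<Sigma>N f \<longleftrightarrow>
     (\<forall>x\<in>M. f x \<in> N) \<and> (\<forall>E\<in>\<Sigma>N. f -` E \<inter> M \<in> \<Sigma>)"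

definition inf_type_space ::
  "'i set \<Rightarrow> 's set \<Rightarrow> 'm set \<Rightarrow> 'm set set \<Rightarrow> ('i \<Rightarrow> 'm \<Rightarrow> ('m set \<Rightarrow> real)) \<Rightarrow> ('m \<Rightarrow> 's) \<Rightarrow> bool"
  where
  "inf_type_space I S M \<Sigma> T \<theta> \<longleftrightarrow>
     M \<noteq> {} \<and> inf_field M \<Sigma> \<and>
     (\<forall>i\<in>I. measurable_map M \<Sigma> (Delta M \<Sigma>) (Delta_field M \<Sigma>) (T i)) \<and>
     (\<forall>i\<in>I. \<forall>m\<in>M. \<forall>A\<in>\<Sigma>. {m'\<in>M. T i m' = T i m} \<subseteq> A \<longrightarrow> T i m A = 1) \<and>
     measurable_map M \<Sigma> S (Pow S) \<theta>"

definition star_type_space ::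
  "'i set \<Rightarrow> 's set \<Rightarrow> 'm set \<Rightarrow> ('i \<Rightarrow> 'm \<Rightarrow> ('m set \<Rightarrow> real)) \<Rightarrow> ('m \<Rightarrow> 's) \<Rightarrow> bool"
  where
  "star_type_space I S M T \<theta> \<longleftrightarrow>
     M \<noteq> {} \<and>
     (\<forall>i\<in>I. \<forall>m\<in>M. fa_prob M (Pow M) (T i m)) \<and>
     (\<forall>i\<in>I. \<forall>m\<in>M. T i m {m'\<in>M. T i m' = T i m} = 1) \<and>
     (\<forall>m\<in>M. \<theta> m \<in> S)"

definition type_morphism ::
  "'i set \<Rightarrow> 'n set \<Rightarrow> 'n set set \<Rightarrow> ('i \<Rightarrow> 'n \<Rightarrow> ('n set \<Rightarrow> real)) \<Rightarrow> ('n \<Rightarrow> 's)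
   \<Rightarrow> 'm set \<Rightarrow> 'm set set \<Rightarrow> ('i \<Rightarrow> 'm \<Rightarrow> ('m set \<Rightarrow> real)) \<Rightarrow> ('m \<Rightarrow> 's)
   \<Rightarrow> ('n \<Rightarrow> 'm) \<Rightarrow> bool"
  where
  "type_morphism I M' \<Sigma>' T' \<theta>' M \<Sigma> T \<theta> f \<longleftrightarrow>
     measurable_map M' \<Sigma>' M \<Sigma> f \<and>
     (\<forall>m'\<in>M'. \<theta>' m' = \<theta> (f m')) \<and>
     (\<forall>i\<in>I. \<forall>m'\<in>M'. \<forall>E\<in>\<Sigma>. T i (f m') E = T' i m' (f -` E \<inter> M'))"

text \<open>Weak universality, relativised to type spaces whose carrier lives in the type 'n
  (HOL cannot quantify over all types inside a formula).\<close>
definition weak_universal_inf ::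
  "'n itself \<Rightarrow> 'i set \<Rightarrow> 's set \<Rightarrow> 'm set \<Rightarrow> 'm set set \<Rightarrow> ('i \<Rightarrow> 'm \<Rightarrow> ('m set \<Rightarrow> real)) \<Rightarrow> ('m \<Rightarrow> 's) \<Rightarrow> bool"
  where
  "weak_universal_inf (_::'n itself) I S M \<Sigma> T \<theta> \<longleftrightarrow>
     inf_type_space I S M \<Sigma> T \<theta> \<and>
     (\<forall>(M'::'n set) \<Sigma>' T' \<theta>'. inf_type_space I S M' \<Sigma>' T' \<theta>' \<longrightarrow>
        (\<exists>f. type_morphism I M' \<Sigma>' T' \<theta>' M \<Sigma> T \<theta> f))"

definition weak_universal_star ::
  "'n itself \<Rightarrow> 'i set \<Rightarrow> 's set \<Rightarrow> 'm set \<Rightarrow> ('i \<Rightarrow> 'm \<Rightarrow> ('m set \<Rightarrow> real)) \<Rightarrow> ('m \<Rightarrow> 's) \<Rightarrow> bool"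
  where
  "weak_universal_star (_::'n itself) I S M T \<theta> \<longleftrightarrow>
     star_type_space I S M T \<theta> \<and>
     (\<forall>(M'::'n set) T' \<theta>'. star_type_space I S M' T' \<theta>' \<longrightarrow>
        (\<exists>f. type_morphism I M' (Pow M') T' \<theta>' M (Pow M) T \<theta> f))"

end

theory Submission
  imports Defs
begin

datatype 'a pt = Z | X "'a set" | U "'a set" "'a set option"

definition tg :: "nat \<Rightarrow> ('m+'i+'s+nat)" where "tg n = Inr (Inr (Inr n))"

fun enc :: "'m pt \<Rightarrow> ('m+'i+'s+nat) set set" where
  "enc Z = {{tg 0}}"
| "enc (X a) = {{tg 1}, insert (tg 10) (Inl ` a)}"
| "enc (U a None) = {{tg 2}, insert (tg 10) (Inl ` a)}"
| "enc (U a (Some g)) = {{tg 3}, insert (tg 10) (Inl ` a), insert (tg 11) (Inl ` g)}"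

fun knd :: "'a pt \<Rightarrow> nat" where
  "knd Z = 0" | "knd (X a) = 1" | "knd (U a None) = 2" | "knd (U a (Some g)) = 3"
fun fs :: "'a pt \<Rightarrow> 'a set" where
  "fs Z = {}" | "fs (X a) = a" | "fs (U a g) = a"
fun sn :: "'a pt \<Rightarrow> 'a set" where
  "sn (U a (Some g)) = g" | "sn _ = {}"

lemma enc_knd: "n < 10 \<Longrightarrow> ({tg n} \<in> (enc p :: ('m+'i+'s+nat) set set)) = (n = knd p)"
  by (cases p rule: enc.cases) (auto simp: tg_def)

lemma enc_fs: "{x. Inl x \<in> \<Union>{A\<in>(enc p :: ('m+'i+'s+nat) set set). tg 10 \<in> A}} = fs p"
  by (cases p rule: enc.cases) (auto simp: tg_def)

lemma enc_sn: "{x. Inl x \<in> \<Union>{A\<in>(enc p :: ('m+'i+'s+nat) set set). tg 11 \<in> A}} = sn p"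
  by (cases p rule: enc.cases) (auto simp: tg_def)

lemma inj_enc: "inj (enc :: 'm pt \<Rightarrow> ('m+'i+'s+nat) set set)"
proof (rule injI)
  fix p q :: "'m pt"
  assume h: "(enc p :: ('m+'i+'s+nat) set set) = enc q"
  have k: "knd p = knd q"
  proof -
    have "knd p < 10" by (cases p rule: knd.cases) auto
    hence "{tg (knd p)} \<in> (enc p :: ('m+'i+'s+nat) set set)" by (simp add: enc_knd)
    hence "{tg (knd p)} \<in> (enc q :: ('m+'i+'s+nat) set set)" using h by simp
    moreover have "({tg (knd p)} \<in> (enc q :: ('m+'i+'s+nat) set set)) = (knd p = knd q)"
      by (rule enc_knd) fact
    ultimately show ?thesis by simp
  qed
  have f: "fs p = fs q" using enc_fs[of p] enc_fs[of q] h by (metis (no_types))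
  have s: "sn p = sn q" using enc_sn[of p] enc_sn[of q] h by (metis (no_types))
  show "p = q" using k f s
    by (cases p rule: knd.cases; cases q rule: knd.cases) auto
qed

definition ultra :: "'a filter \<Rightarrow> bool" where
  "ultra F \<longleftrightarrow> F \<noteq> bot \<and> (\<forall>P. eventually P F \<or> eventually (\<lambda>x. \<not> P x) F)"

lemma max_filter_ultra:
  assumes "F \<noteq> bot"
  assumes max: "\<And>G. G \<noteq> bot \<Longrightarrow> G \<le> F \<Longrightarrow> F = G"
  shows "ultra F"
  unfolding ultra_def
proof (intro conjI allI)
  show "F \<noteq> bot" by fact
  fix P
  show "eventually P F \<or> (\<forall>\<^sub>Fx in F. \<not> P x)"
  proof (rule disjCI)
    assume "\<not> (\<forall>\<^sub>Fx in F. \<not> P x)"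
    then have "inf F (principal {x. P x}) \<noteq> bot"
      by (simp add: trivial_limit_def eventually_inf_principal not_eventually)
    then have F: "F = inf F (principal {x. P x})"
      by (rule max) simp
    show "eventually P F"
      by (subst F) (simp add: eventually_inf_principal)
  qed
qed

lemma ex_ultra:
  fixes F :: "'a filter"
  assumes F: "F \<noteq> bot"
  shows "\<exists>U\<le>F. ultra U"
proof -
  let ?X = "{G. G \<noteq> bot \<and> G \<le> F}"
  let ?R = "{(b, a). a \<noteq> bot \<and> a \<le> b \<and> b \<le> F}"
  have bot_notin_R: "c \<in> Chains ?R \<Longrightarrow> bot \<notin> c" for c
    by (auto simp: Chains_def)
  have [simp]: "Field ?R = ?X"
    by (auto simp: Field_def bot_unique)
  have "\<exists>m\<in>Field ?R. \<forall>a\<in>Field ?R. (m, a) \<in> ?R \<longrightarrow> a = m" (is "\<exists>m\<in>?A. ?B m")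
  proof (rule Zorns_po_lemma)
    show "Partial_order ?R"
      by (auto simp: partial_order_on_def preorder_on_def
          antisym_def refl_on_def trans_def Field_def bot_unique)
    show "\<exists>u\<in>Field ?R. \<forall>a\<in>C. (a, u) \<in> ?R" if C: "C \<in> Chains ?R" for C
    proof (simp, intro exI conjI ballI)
      have Inf_C: "Inf C \<noteq> bot" "Inf C \<le> F" if "C \<noteq> {}"
      proof -
        from C that have "Inf C = bot \<longleftrightarrow> (\<exists>x\<in>C. x = bot)"
          unfolding trivial_limit_def by (intro eventually_Inf_base) (auto simp: Chains_def)
        with C show "Inf C \<noteq> bot"
          by (simp add: bot_notin_R)
        from that obtain x where "x \<in> C" by auto
        with C show "Inf C \<le> F"
          by (auto intro!: Inf_lower2[of x] simp: Chains_def)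
      qed
      then have [simp]: "inf F (Inf C) = (if C = {} then F else Inf C)"
        using C by (auto simp add: inf_absorb2)
      from C show "inf F (Inf C) \<noteq> bot"
        by (simp add: F Inf_C)
      from C show "inf F (Inf C) \<le> F"
        by (simp add: Chains_def Inf_C F)
      with C show "inf F (Inf C) \<le> x" "x \<le> F" if "x \<in> C" for x
        using that  by (auto intro: Inf_lower simp: Chains_def)
    qed
  qed
  then obtain U where U: "U \<in> ?A" "?B U" ..
  show ?thesis
  proof
    from U show "U \<le> F \<and> ultra U"
      by (auto intro!: max_filter_ultra)
  qed
qed


definition dirac :: "'a \<Rightarrow> 'a set \<Rightarrow> real" where
  "dirac x = (\<lambda>E. if x \<in> E then 1 else 0)"

definition ufm :: "'a filter \<Rightarrow> 'a set \<Rightarrow> real" where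
  "ufm F = (\<lambda>E. if eventually (\<lambda>x. x \<in> E) F then 1 else 0)"

lemma fa_dirac: "fa_prob UNIV UNIV (dirac x)"
  by (auto simp: fa_prob_def dirac_def)

lemma fa_ufm:
  assumes u: "ultra F"
  shows "fa_prob UNIV UNIV (ufm F)"
proof -
  have nb: "F \<noteq> bot" and ul: "\<And>P. eventually P F \<or> eventually (\<lambda>x. \<not> P x) F"
    using u by (auto simp: ultra_def)
  have add: "ufm F (E \<union> G) = ufm F E + ufm F G" if d: "E \<inter> G = {}" for E G
  proof -
    have n2: "\<not> (eventually (\<lambda>x. x \<in> E) F \<and> eventually (\<lambda>x. x \<in> G) F)"
    proof
      assume "eventually (\<lambda>x. x \<in> E) F \<and> eventually (\<lambda>x. x \<in> G) F"
      hence "eventually (\<lambda>x. x \<in> E \<and> x \<in> G) F" by (simp add: eventually_conj_iff)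
      hence "eventually (\<lambda>x. False) F" by (rule eventually_mono) (use d in auto)
      thus False using nb by (simp add: trivial_limit_def)
    qed
    have iff: "eventually (\<lambda>x. x \<in> E \<union> G) F \<longleftrightarrow> eventually (\<lambda>x. x \<in> E) F \<or> eventually (\<lambda>x. x \<in> G) F"
    proof
      assume h: "eventually (\<lambda>x. x \<in> E \<union> G) F"
      show "eventually (\<lambda>x. x \<in> E) F \<or> eventually (\<lambda>x. x \<in> G) F"
      proof (rule ccontr)
        assume "\<not> ?thesis"
        hence "eventually (\<lambda>x. x \<notin> E) F" "eventually (\<lambda>x. x \<notin> G) F"
          using ul[of "\<lambda>x. x \<in> E"] ul[of "\<lambda>x. x \<in> G"] by auto
        with h have "eventually (\<lambda>x. x \<in> E \<union> G \<and> x \<notin> E \<and> x \<notin> G) F"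
          by (simp add: eventually_conj_iff)
        hence "eventually (\<lambda>x. False) F" by (rule eventually_mono) auto
        thus False using nb by (simp add: trivial_limit_def)
      qed
    next
      assume "eventually (\<lambda>x. x \<in> E) F \<or> eventually (\<lambda>x. x \<in> G) F"
      thus "eventually (\<lambda>x. x \<in> E \<union> G) F" by (auto elim: eventually_mono)
    qed
    show ?thesis using n2 iff by (auto simp: ufm_def)
  qed
  show ?thesis unfolding fa_prob_def using add by (auto simp: ufm_def)
qed

lemma fa_one_mono:
  assumes "fa_prob M (Pow M) \<mu>" "B \<subseteq> A" "A \<subseteq> M" "\<mu> B = 1"
  shows "\<mu> A = 1"
proof -
  have f: "\<forall>E\<in>Pow M. 0 \<le> \<mu> E" "\<mu> M = 1"
    "\<forall>E\<in>Pow M. \<forall>F\<in>Pow M. E \<inter> F = {} \<longrightarrow> \<mu> (E \<union> F) = \<mu> E + \<mu> F"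
    using assms(1) by (auto simp: fa_prob_def)
  have "\<mu> A = \<mu> B + \<mu> (A - B)"
    using f(3)[rule_format, of B "A - B"] assms(2,3) by (auto simp: Un_absorb1 Un_Diff_cancel)
  moreover have "0 \<le> \<mu> (A - B)" using f(1) assms by auto
  moreover have "\<mu> M = \<mu> A + \<mu> (M - A)"
    using f(3)[rule_format, of A "M - A"] assms(2,3) by (auto simp: Un_absorb1 Un_Diff_cancel)
  moreover have "0 \<le> \<mu> (M - A)" using f(1) by auto
  ultimately show ?thesis using assms(4) f(2) by linarith
qed

section \<open>Well orders\<close>

definition lt :: "'a rel \<Rightarrow> 'a \<Rightarrow> 'a \<Rightarrow> bool" where
  "lt r x y \<longleftrightarrow> (x, y) \<in> r \<and> x \<noteq> y"

locale WO =
  fixes r :: "'m set rel"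
  assumes wo: "Well_order r" and fld: "Field r = UNIV"
begin

lemma refl: "(x, x) \<in> r"
  using wo fld by (auto simp: well_order_on_def linear_order_on_def partial_order_on_def
      preorder_on_def refl_on_def)

lemma trans: "(x, y) \<in> r \<Longrightarrow> (y, z) \<in> r \<Longrightarrow> (x, z) \<in> r"
  using wo by (auto simp: well_order_on_def linear_order_on_def partial_order_on_def
      preorder_on_def dest: transD)

lemma antisym: "(x, y) \<in> r \<Longrightarrow> (y, x) \<in> r \<Longrightarrow> x = y"
  using wo by (auto simp: well_order_on_def linear_order_on_def partial_order_on_def
      dest: antisymD)

lemma total: "(x, y) \<in> r \<or> (y, x) \<in> r"
  using wo fld refl by (cases "x = y") (auto simp: well_order_on_def linear_order_on_def total_on_def)

lemma wf: "wf (r - Id)"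
  using wo by (auto simp: well_order_on_def)

lemma lt_trans: "lt r x y \<Longrightarrow> lt r y z \<Longrightarrow> lt r x z"
  unfolding lt_def using trans antisym by blast

lemma lt_le_trans: "lt r x y \<Longrightarrow> (y, z) \<in> r \<Longrightarrow> lt r x z"
  unfolding lt_def using trans antisym by blast

lemma le_lt_trans: "(x, y) \<in> r \<Longrightarrow> lt r y z \<Longrightarrow> lt r x z"
  unfolding lt_def using trans antisym by blast

lemma lt_total: "x \<noteq> y \<Longrightarrow> lt r x y \<or> lt r y x"
  unfolding lt_def using total by blast

lemma lt_not_le: "lt r x y \<Longrightarrow> (y, x) \<in> r \<Longrightarrow> False"
  unfolding lt_def using antisym by blast

end

section \<open>The source type space\<close>

definition Cset :: "'m set rel \<Rightarrow> 'm set \<Rightarrow> ('m+'i+'s+nat) set set set" where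
  "Cset r a = enc ` ({U a None} \<union> {U a (Some g) | g. lt r g a})"

definition tailS :: "'m set rel \<Rightarrow> 'm set \<Rightarrow> 'm set \<Rightarrow> ('m+'i+'s+nat) set set set" where
  "tailS r b a = enc ` {U a (Some g) | g. (b, g) \<in> r \<and> lt r g a}"

definition baseS :: "'m set rel \<Rightarrow> 'm set \<Rightarrow> ('m+'i+'s+nat) set set set set" where
  "baseS r a = insert (Cset r a) {tailS r b a | b. lt r b a}"

definition Ff :: "'m set rel \<Rightarrow> 'm set \<Rightarrow> ('m+'i+'s+nat) set set filter" where
  "Ff r a = (INF B\<in>baseS r a. principal B)"

definition Uf :: "'m set rel \<Rightarrow> 'm set \<Rightarrow> ('m+'i+'s+nat) set set filter" where
  "Uf r a = (SOME V. V \<le> Ff r a \<and> ultra V)"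

definition nu :: "'m set rel \<Rightarrow> 'm set \<Rightarrow> ('m+'i+'s+nat) set set set \<Rightarrow> real" where
  "nu r a = ufm (Uf r a)"

lemma (in WO) Ff_ev:
  "eventually P (Ff r a) \<longleftrightarrow> (\<exists>B\<in>(baseS r a :: ('m+'i+'s+nat) set set set set). \<forall>x\<in>B. P x)"
proof -
  have dir: "\<exists>B3\<in>(baseS r a :: ('m+'i+'s+nat) set set set set). B3 \<subseteq> B1 \<inter> B2"
    if "B1 \<in> baseS r a" "B2 \<in> baseS r a" for B1 B2
  proof -
    have tc: "tailS r b a \<subseteq> (Cset r a :: ('m+'i+'s+nat) set set set)" for b
      by (auto simp: tailS_def Cset_def)
    have tt: "(b1, b2) \<in> r \<Longrightarrow> tailS r b2 a \<subseteq> (tailS r b1 a :: ('m+'i+'s+nat) set set set)" for b1 b2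
      by (auto simp: tailS_def intro: trans)
    show ?thesis using that total tc tt unfolding baseS_def
      by (auto; metis Int_absorb2 Int_absorb1 order_refl)
  qed
  show ?thesis unfolding Ff_def
    apply (subst eventually_Inf_base)
    subgoal by (simp add: baseS_def)
    subgoal using dir by (fastforce simp: inf_principal)
    subgoal by (auto simp: eventually_principal)
    done
qed

lemma (in WO) Uf_props:
  shows "ultra (Uf r a :: ('m+'i+'s+nat) set set filter)"
    and "B \<in> (baseS r a :: ('m+'i+'s+nat) set set set set) \<Longrightarrow> eventually (\<lambda>x. x \<in> B) (Uf r a)"
proof -
  have ne: "B \<noteq> {}" if "B \<in> (baseS r a :: ('m+'i+'s+nat) set set set set)" for B
    using that refl by (auto simp: baseS_def Cset_def tailS_def)
  have nb: "(Ff r a :: ('m+'i+'s+nat) set set filter) \<noteq> bot"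
    using Ff_ev[of "\<lambda>x. False" a] ne by (auto simp: trivial_limit_def)
  have ex: "\<exists>V. V \<le> (Ff r a :: ('m+'i+'s+nat) set set filter) \<and> ultra V"
    using ex_ultra[OF nb] by auto
  hence u: "(Uf r a :: ('m+'i+'s+nat) set set filter) \<le> Ff r a \<and> ultra (Uf r a :: ('m+'i+'s+nat) set set filter)"
    unfolding Uf_def by (rule someI_ex[where P="\<lambda>V. V \<le> Ff r a \<and> ultra V"])
  thus "ultra (Uf r a :: ('m+'i+'s+nat) set set filter)" by simp
  assume "B \<in> (baseS r a :: ('m+'i+'s+nat) set set set set)"
  hence "eventually (\<lambda>x. x \<in> B) (Ff r a)" using Ff_ev[of "\<lambda>x. x \<in> B" a] by auto
  thus "eventually (\<lambda>x. x \<in> B) (Uf r a)" using u by (auto simp: le_filter_def)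
qed


definition Tp :: "'i \<Rightarrow> 'i \<Rightarrow> 'm set rel \<Rightarrow> 'i \<Rightarrow> 'm pt \<Rightarrow> (('m+'i+'s+nat) set set set \<Rightarrow> real)" where
  "Tp pa pb r i p = (if i = pa then (case p of Z \<Rightarrow> dirac (enc Z) | X al \<Rightarrow> nu r al | U al g \<Rightarrow> nu r al)
     else if i = pb then (case p of U al None \<Rightarrow> dirac (enc Z) | U al (Some g) \<Rightarrow> dirac (enc (X g))
                                  | _ \<Rightarrow> dirac (enc p))
     else dirac (enc p))"

definition Ts :: "'i \<Rightarrow> 'i \<Rightarrow> 'm set rel \<Rightarrow> 'i \<Rightarrow> ('m+'i+'s+nat) set set \<Rightarrow> (('m+'i+'s+nat) set set set \<Rightarrow> real)" where
  "Ts pa pb r i m = (if m \<in> range enc then Tp pa pb r i (inv enc m) else dirac m)"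

definition th :: "'s \<Rightarrow> 's \<Rightarrow> ('m+'i+'s+nat) set set \<Rightarrow> 's" where
  "th s1 s2 m = (if m = enc Z then s2 else s1)"

lemma Ts_enc: "Ts pa pb r i (enc p) = Tp pa pb r i p"
  by (simp add: Ts_def inj_enc inv_f_f)

declare enc.simps[simp del]

lemma enc_eq[simp]: "(enc p = enc q) \<longleftrightarrow> p = q"
  using inj_enc by (auto dest: injD)

lemma (in WO) Ts_fa: "fa_prob UNIV UNIV (Ts pa pb r i m)"
proof -
  have nu: "fa_prob UNIV UNIV (nu r al :: ('m+'i+'s+nat) set set set \<Rightarrow> real)" for al
    unfolding nu_def by (rule fa_ufm) (rule Uf_props(1))
  have "fa_prob UNIV UNIV (Tp pa pb r i p)" for p
    unfolding Tp_def using nu fa_dirac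
    by (auto split: pt.splits option.splits)
  thus ?thesis unfolding Ts_def using fa_dirac by auto
qed

lemma (in WO) Ts_intro: "Ts pa pb r i m {m'. Ts pa pb r i m' = Ts pa pb r i m} = 1"
proof -
  have dself: "Ts pa pb r i m {m'. Ts pa pb r i m' = Ts pa pb r i m} = 1"
    if "Ts pa pb r i m = dirac c" "Ts pa pb r i c = dirac c" for c
    using that by (simp add: dirac_def)
  show ?thesis
  proof (cases "m \<in> range enc")
    case False
    thus ?thesis by (intro dself[of m]) (auto simp: Ts_def)
  next
    case True
    then obtain p where m: "m = enc p" by auto
    show ?thesis
    proof (cases "i = pa")
      case ia: True
      show ?thesis
      proof (cases p)
        case Z thus ?thesis using ia m by (intro dself[of "enc Z"]) (auto simp: Ts_enc Tp_def)
      next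
        case (X al)
        have "Cset r al \<subseteq> {m'. Ts pa pb r i m' = nu r al}"
          using ia by (auto simp: Cset_def Ts_enc Tp_def)
        moreover have "eventually (\<lambda>x. x \<in> Cset r al) (Uf r al :: ('m+'i+'s+nat) set set filter)"
          by (rule Uf_props(2)) (simp add: baseS_def)
        ultimately have "eventually (\<lambda>x. x \<in> {m'. Ts pa pb r i m' = nu r al}) (Uf r al)"
          by (auto elim: eventually_mono)
        thus ?thesis using ia m X by (simp add: Ts_enc Tp_def nu_def ufm_def)
      next
        case (U al g)
        have "Cset r al \<subseteq> {m'. Ts pa pb r i m' = nu r al}"
          using ia by (auto simp: Cset_def Ts_enc Tp_def)
        moreover have "eventually (\<lambda>x. x \<in> Cset r al) (Uf r al :: ('m+'i+'s+nat) set set filter)"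
          by (rule Uf_props(2)) (simp add: baseS_def)
        ultimately have "eventually (\<lambda>x. x \<in> {m'. Ts pa pb r i m' = nu r al}) (Uf r al)"
          by (auto elim: eventually_mono)
        thus ?thesis using ia m U by (simp add: Ts_enc Tp_def nu_def ufm_def)
      qed
    next
      case na: False
      show ?thesis
      proof (cases "i = pb")
        case ib: True
        show ?thesis
        proof (cases p)
          case Z thus ?thesis using na ib m by (intro dself[of "enc Z"]) (auto simp: Ts_enc Tp_def)
        next
          case (X al) thus ?thesis using na ib m by (intro dself[of "enc (X al)"]) (auto simp: Ts_enc Tp_def)
        next
          case (U al g)
          show ?thesis
          proof (cases g)
            case None thus ?thesis using na ib m U by (intro dself[of "enc Z"]) (auto simp: Ts_enc Tp_def)
          next
            case (Some ga) thus ?thesis using na ib m U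
              by (intro dself[of "enc (X ga)"]) (auto simp: Ts_enc Tp_def)
          qed
        qed
      next
        case False
        thus ?thesis using na m by (intro dself[of m]) (auto simp: Ts_enc Tp_def)
      qed
    qed
  qed
qed

lemma (in WO) src_star:
  assumes "s1 \<in> S" "s2 \<in> S"
  shows "star_type_space I S (UNIV :: ('m+'i+'s+nat) set set set) (Ts pa pb r) (th s1 s2)"
proof -
  have a: "\<forall>i\<in>I. \<forall>m\<in>UNIV. fa_prob UNIV (Pow UNIV) (Ts pa pb r i m :: ('m+'i+'s+nat) set set set \<Rightarrow> real)"
  proof (intro ballI)
    fix i m
    show "fa_prob UNIV (Pow UNIV) (Ts pa pb r i m :: ('m+'i+'s+nat) set set set \<Rightarrow> real)"
      using Ts_fa[of pa pb i m] by (simp only: Pow_UNIV)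
  qed
  have b: "\<forall>i\<in>I. \<forall>m\<in>UNIV. (Ts pa pb r i m :: ('m+'i+'s+nat) set set set \<Rightarrow> real) {m'\<in>UNIV. Ts pa pb r i m' = Ts pa pb r i m} = 1"
  proof (intro ballI)
    fix i m
    have e: "{m'\<in>UNIV. Ts pa pb r i m' = (Ts pa pb r i m :: ('m+'i+'s+nat) set set set \<Rightarrow> real)}
       = {m'. Ts pa pb r i m' = Ts pa pb r i m}" by blast
    show "(Ts pa pb r i m :: ('m+'i+'s+nat) set set set \<Rightarrow> real) {m'\<in>UNIV. Ts pa pb r i m' = Ts pa pb r i m} = 1"
      unfolding e by (rule Ts_intro)
  qed
  have c: "\<forall>m\<in>UNIV. th s1 s2 (m :: ('m+'i+'s+nat) set set) \<in> S" using assms by (simp add: th_def)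
  have d: "(UNIV :: ('m+'i+'s+nat) set set set) \<noteq> {}" by simp
  show ?thesis unfolding star_type_space_def using a b c d by (intro conjI)
qed

lemma (in WO) src_inf:
  assumes "s1 \<in> S" "s2 \<in> S"
  shows "inf_type_space I S (UNIV :: ('m+'i+'s+nat) set set set) UNIV (Ts pa pb r) (th s1 s2)"
proof -
  have intro: "(Ts pa pb r i m :: ('m+'i+'s+nat) set set set \<Rightarrow> real) A = 1"
    if "{m'. Ts pa pb r i m' = Ts pa pb r i m} \<subseteq> A" for i m A
  proof -
    have "fa_prob UNIV (Pow UNIV) (Ts pa pb r i m :: ('m+'i+'s+nat) set set set \<Rightarrow> real)"
      using Ts_fa[of pa pb i m] by (simp only: Pow_UNIV)
    from fa_one_mono[OF this that subset_UNIV] show ?thesis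
      using Ts_intro[of pa pb i m] by blast
  qed
  have f1: "inf_field UNIV (UNIV :: ('m+'i+'s+nat) set set set set)" by (auto simp: inf_field_def)
  have f2: "\<forall>i\<in>I. measurable_map UNIV UNIV (Delta UNIV UNIV) (Delta_field UNIV UNIV)
      (Ts pa pb r i :: ('m+'i+'s+nat) set set \<Rightarrow> ('m+'i+'s+nat) set set set \<Rightarrow> real)"
  proof (intro ballI)
    fix i
    show "measurable_map UNIV UNIV (Delta UNIV UNIV) (Delta_field UNIV UNIV)
      (Ts pa pb r i :: ('m+'i+'s+nat) set set \<Rightarrow> ('m+'i+'s+nat) set set set \<Rightarrow> real)"
      unfolding measurable_map_def Delta_def using Ts_fa[of pa pb i] by blast
  qed
  have f3: "\<forall>i\<in>I. \<forall>m\<in>UNIV. \<forall>A\<in>UNIV. {m'\<in>UNIV. Ts pa pb r i m' = Ts pa pb r i m} \<subseteq> A \<longrightarrow>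
      (Ts pa pb r i m :: ('m+'i+'s+nat) set set set \<Rightarrow> real) A = 1"
  proof (intro ballI impI)
    fix i m A
    assume "{m'\<in>UNIV. Ts pa pb r i m' = (Ts pa pb r i m :: ('m+'i+'s+nat) set set set \<Rightarrow> real)} \<subseteq> A"
    hence "{m'. Ts pa pb r i m' = (Ts pa pb r i m :: ('m+'i+'s+nat) set set set \<Rightarrow> real)} \<subseteq> A" by blast
    thus "(Ts pa pb r i m :: ('m+'i+'s+nat) set set set \<Rightarrow> real) A = 1" by (rule intro)
  qed
  have f4: "measurable_map UNIV UNIV S (Pow S) (th s1 s2 :: ('m+'i+'s+nat) set set \<Rightarrow> 's)"
    unfolding measurable_map_def using assms by (simp add: th_def)
  have d: "(UNIV :: ('m+'i+'s+nat) set set set) \<noteq> {}" by simp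
  show ?thesis unfolding inf_type_space_def using d f1 f2 f3 f4 by (intro conjI)
qed

lemma (in WO) no_morph:
  fixes M :: "'m set" and Sig :: "'m set set" and T :: "'i \<Rightarrow> 'm \<Rightarrow> 'm set \<Rightarrow> real"
    and \<theta> :: "'m \<Rightarrow> 's" and f :: "('m+'i+'s+nat) set set \<Rightarrow> 'm"
  assumes tgt: "inf_type_space I S M Sig T \<theta>"
    and pI: "pa \<in> I" "pb \<in> I" "pa \<noteq> pb" and sS: "s1 \<noteq> s2" "s2 \<in> S"
    and mor: "type_morphism I UNIV UNIV (Ts pa pb r) (th s1 s2) M Sig T \<theta> f"
  shows False
proof -
  from tgt have M0: "inf_field M Sig"
    and Tmeas: "\<forall>i\<in>I. measurable_map M Sig (Delta M Sig) (Delta_field M Sig) (T i)"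
    and thmeas: "measurable_map M Sig S (Pow S) \<theta>"
    by (auto simp: inf_type_space_def)
  have sigsub: "A \<subseteq> M" if "A \<in> Sig" for A using M0 that by (auto simp: inf_field_def)
  have MS: "M \<in> Sig" using M0 by (auto simp: inf_field_def)
  have compl: "M - A \<in> Sig" if "A \<in> Sig" for A using M0 that by (auto simp: inf_field_def)
  have inter: "\<Inter>F \<in> Sig" if "F \<subseteq> Sig" "F \<noteq> {}" for F using M0 that by (auto simp: inf_field_def)
  have union: "\<Union>F \<in> Sig" if FS: "F \<subseteq> Sig" for F
  proof (cases "F = {}")
    case True
    thus ?thesis using compl[OF MS] by simp
  next
    case False
    have "\<Union>F = M - \<Inter>((\<lambda>A. M - A) ` F)" using sigsub FS False by auto
    moreover have "\<Inter>((\<lambda>A. M - A) ` F) \<in> Sig" using False FS compl by (intro inter) auto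
    ultimately show ?thesis using compl by simp
  qed
  have lev: "{m\<in>M. p \<le> T i m E} \<in> Sig" if "i \<in> I" "E \<in> Sig" "0 \<le> p" "p \<le> 1" for i E p
  proof -
    let ?G = "{\<mu>\<in>Delta M Sig. p \<le> \<mu> E}"
    have G: "?G \<in> Delta_field M Sig" unfolding Delta_field_def gen_inf_field_def
      using that by blast
    have "T i -` ?G \<inter> M \<in> Sig" using Tmeas that(1) G unfolding measurable_map_def by blast
    moreover have "T i -` ?G \<inter> M = {m\<in>M. p \<le> T i m E}"
      using Tmeas that by (auto simp: measurable_map_def)
    ultimately show ?thesis by simp
  qed
  have thS: "{m\<in>M. \<theta> m = s2} \<in> Sig"
  proof -
    have "\<theta> -` {s2} \<inter> M \<in> Sig" using thmeas sS by (auto simp: measurable_map_def)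
    moreover have "\<theta> -` {s2} \<inter> M = {m\<in>M. \<theta> m = s2}" by auto
    ultimately show ?thesis by simp
  qed
  from mor have fM: "\<And>y. f y \<in> M" and thf: "\<And>y. th s1 s2 y = \<theta> (f y)"
    and Tf: "\<And>i y E. i \<in> I \<Longrightarrow> E \<in> Sig \<Longrightarrow> T i (f y) E = Ts pa pb r i y (f -` E)"
    by (auto simp: type_morphism_def measurable_map_def)
  define xp where "xp al = f (enc (X al))" for al
  define sep where "sep x y \<longleftrightarrow> (\<exists>A\<in>Sig. x \<in> A \<and> y \<notin> A)" for x y
  define atom where "atom x = \<Inter>{A\<in>Sig. x \<in> A}" for x
  have atomS: "atom x \<in> Sig" if "x \<in> M" for x
    unfolding atom_def using that MS by (intro inter) auto
  have atom_in: "x \<in> atom x" for x unfolding atom_def by auto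
  have sep_atom: "y \<notin> atom x" if "sep x y" for x y using that unfolding sep_def atom_def by auto
  have sep_sym: "sep y x" if "x \<in> M" "y \<in> M" "sep x y" for x y
    using that compl unfolding sep_def by blast
  have xpM: "xp al \<in> M" for al unfolding xp_def by (rule fM)
  have th_xp: "\<theta> (xp al) = s1" for al
    using thf[of "enc (X al)"] sS unfolding xp_def th_def by simp
  have th_z: "\<theta> (f (enc Z)) = s2"
    using thf[of "enc Z"] unfolding th_def by simp
  have Tb_UN: "(Ts pa pb r pb (enc (U al None)) :: ('m+'i+'s+nat) set set set \<Rightarrow> real) = dirac (enc Z)" for al
    using pI by (simp add: Ts_enc Tp_def)
  have Tb_US: "(Ts pa pb r pb (enc (U al (Some g))) :: ('m+'i+'s+nat) set set set \<Rightarrow> real) = dirac (enc (X g))" for al g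
    using pI by (simp add: Ts_enc Tp_def)
  have Ta_X: "(Ts pa pb r pa (enc (X al)) :: ('m+'i+'s+nat) set set set \<Rightarrow> real) = nu r al" for al
    by (simp add: Ts_enc Tp_def)
  have main: "\<forall>be. lt r be al \<longrightarrow> sep (xp be) (xp al)" for al
  proof (induction al rule: wf_induct_rule[OF wf])
    case (1 al)
    have IH: "\<And>g be. lt r g al \<Longrightarrow> lt r be g \<Longrightarrow> sep (xp be) (xp g)"
      using 1 by (auto simp: lt_def)
    have sepall: "sep (xp d) (xp g)" if "lt r g al" "lt r d al" "g \<noteq> d" for g d
    proof -
      from lt_total[OF that(3)] show ?thesis
      proof
        assume "lt r g d"
        hence "sep (xp g) (xp d)" using IH that by blast
        thus ?thesis using sep_sym xpM by blast
      next
        assume "lt r d g"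
        thus ?thesis using IH that by blast
      qed
    qed
    show ?case
    proof (intro allI impI)
      fix be assume lb: "lt r be al"
      define D where "D = \<Union>(insert {m\<in>M. \<theta> m = s2} {atom (xp g) | g. lt r g be})"
      have DS: "D \<in> Sig" unfolding D_def using thS atomS xpM by (intro union) auto
      define E where "E = {m\<in>M. 1 \<le> T pb m D}"
      have ES: "E \<in> Sig" unfolding E_def using pI DS by (intro lev) auto
      have keyD: "xp g \<in> D \<longleftrightarrow> lt r g be" if lg: "lt r g al" for g
      proof
        assume "lt r g be"
        thus "xp g \<in> D" unfolding D_def using atom_in by blast
      next
        assume "xp g \<in> D"
        then obtain d where d: "lt r d be" "xp g \<in> atom (xp d)"
          unfolding D_def using th_xp sS by auto
        show "lt r g be"
        proof (cases "g = d")
          case True thus ?thesis using d by simp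
        next
          case False
          have "lt r d al" using d lb lt_trans by blast
          hence "sep (xp d) (xp g)" using sepall lg False by blast
          thus ?thesis using sep_atom d by blast
        qed
      qed
      have inG: "f y \<in> E \<longleftrightarrow> 1 \<le> Ts pa pb r pb y (f -` D)" for y
        unfolding E_def using fM Tf[OF pI(2) DS] by auto
      have GN: "f (enc (U al' None)) \<in> E" for al'
      proof -
        have "f (enc Z) \<in> D" unfolding D_def using th_z fM by auto
        thus ?thesis using inG Tb_UN by (simp add: dirac_def)
      qed
      have GS: "f (enc (U al' (Some g))) \<in> E \<longleftrightarrow> xp g \<in> D" for al' g
        using inG Tb_US by (simp add: dirac_def xp_def)
      have uu: "ultra (Uf r al :: ('m+'i+'s+nat) set set filter)" "ultra (Uf r be :: ('m+'i+'s+nat) set set filter)"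
        by (rule Uf_props(1))+
      have v1: "T pa (xp al) E = 0"
      proof -
        have eq: "T pa (xp al) E = nu r al (f -` E)"
          unfolding xp_def using Tf[OF pI(1) ES] Ta_X by simp
        have ev: "eventually (\<lambda>x. x \<in> tailS r be al) (Uf r al :: ('m+'i+'s+nat) set set filter)"
          by (rule Uf_props(2)) (use lb in \<open>auto simp: baseS_def\<close>)
        have ev2: "eventually (\<lambda>x. x \<notin> f -` E) (Uf r al :: ('m+'i+'s+nat) set set filter)"
        proof (rule eventually_mono[OF ev])
          fix x assume "x \<in> (tailS r be al :: ('m+'i+'s+nat) set set set)"
          then obtain g where g: "x = enc (U al (Some g))" "(be, g) \<in> r" "lt r g al"
            by (auto simp: tailS_def)
          show "x \<notin> f -` E"
          proof
            assume "x \<in> f -` E"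
            hence "lt r g be" using GS g keyD by auto
            thus False using g(2) lt_not_le by blast
          qed
        qed
        have "\<not> eventually (\<lambda>x. x \<in> f -` E) (Uf r al :: ('m+'i+'s+nat) set set filter)"
        proof
          assume "eventually (\<lambda>x. x \<in> f -` E) (Uf r al :: ('m+'i+'s+nat) set set filter)"
          with ev2 have "eventually (\<lambda>x. False) (Uf r al :: ('m+'i+'s+nat) set set filter)"
            by (auto elim: eventually_rev_mp)
          thus False using uu(1) by (simp add: ultra_def trivial_limit_def)
        qed
        thus ?thesis using eq by (simp add: nu_def ufm_def)
      qed
      have v2: "T pa (xp be) E = 1"
      proof -
        have eq: "T pa (xp be) E = nu r be (f -` E)"
          unfolding xp_def using Tf[OF pI(1) ES] Ta_X by simp
        have ev: "eventually (\<lambda>x. x \<in> Cset r be) (Uf r be :: ('m+'i+'s+nat) set set filter)"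
          by (rule Uf_props(2)) (auto simp: baseS_def)
        have sub: "(Cset r be :: ('m+'i+'s+nat) set set set) \<subseteq> f -` E"
        proof
          fix x assume "x \<in> (Cset r be :: ('m+'i+'s+nat) set set set)"
          then consider "x = enc (U be None)" | g where "x = enc (U be (Some g))" "lt r g be"
            by (auto simp: Cset_def)
          thus "x \<in> f -` E"
          proof cases
            case 1 thus ?thesis using GN by simp
          next
            case (2 g)
            have "lt r g al" using 2 lb lt_trans by blast
            thus ?thesis using 2 GS keyD by simp
          qed
        qed
        have "eventually (\<lambda>x. x \<in> f -` E) (Uf r be :: ('m+'i+'s+nat) set set filter)"
          using ev sub by (auto elim: eventually_mono)
        thus ?thesis using eq by (simp add: nu_def ufm_def)
      qed
      let ?A = "{m\<in>M. 1 \<le> T pa m E}"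
      have "?A \<in> Sig" using pI ES by (intro lev) auto
      moreover have "xp be \<in> ?A" using v2 xpM by simp
      moreover have "xp al \<notin> ?A" using v1 by simp
      ultimately show "sep (xp be) (xp al)" unfolding sep_def by (intro bexI[of _ ?A]) simp_all
    qed
  qed
  have "inj xp"
  proof (rule injI)
    fix al be assume eq: "xp al = xp be"
    show "al = be"
    proof (rule ccontr)
      assume "al \<noteq> be"
      then consider "lt r al be" | "lt r be al" using lt_total by blast
      thus False
      proof cases
        case 1
        hence "sep (xp al) (xp be)" using main[of be] by blast
        thus False using eq unfolding sep_def by metis
      next
        case 2
        hence "sep (xp be) (xp al)" using main[of al] by blast
        thus False using eq unfolding sep_def by metis
      qed
    qed
  qed
  hence "surj (inv xp)" by (rule inj_imp_surj_inv)
  hence "inv xp ` UNIV = Pow UNIV" by simp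
  thus False using Cantors_theorem[of "UNIV :: 'm set"] by blast
qed


lemma star_inf:
  assumes "star_type_space I S M T \<theta>"
  shows "inf_type_space I S M (Pow M) T \<theta>"
proof -
  have st: "M \<noteq> {}" "\<forall>i\<in>I. \<forall>m\<in>M. fa_prob M (Pow M) (T i m)"
    "\<forall>i\<in>I. \<forall>m\<in>M. T i m {m'\<in>M. T i m' = T i m} = 1" "\<forall>m\<in>M. \<theta> m \<in> S"
    using assms unfolding star_type_space_def by blast+
  have intro: "T i m A = 1" if "i \<in> I" "m \<in> M" "A \<in> Pow M" "{m'\<in>M. T i m' = T i m} \<subseteq> A" for i m A
  proof -
    have h1: "fa_prob M (Pow M) (T i m)" using st(2) that by blast
    have h2: "T i m {m'\<in>M. T i m' = T i m} = 1" using st(3) that by blast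
    have h3: "A \<subseteq> M" using that by blast
    show ?thesis by (rule fa_one_mono[OF h1 that(4) h3 h2])
  qed
  have f1: "inf_field M (Pow M)" unfolding inf_field_def by blast
  have f2: "\<forall>i\<in>I. measurable_map M (Pow M) (Delta M (Pow M)) (Delta_field M (Pow M)) (T i)"
    unfolding measurable_map_def Delta_def using st(2) by blast
  have f3: "\<forall>i\<in>I. \<forall>m\<in>M. \<forall>A\<in>Pow M. {m'\<in>M. T i m' = T i m} \<subseteq> A \<longrightarrow> T i m A = 1"
    using intro by blast
  have f4: "measurable_map M (Pow M) S (Pow S) \<theta>"
    unfolding measurable_map_def using st(4) by blast
  show ?thesis unfolding inf_type_space_def using st(1) f1 f2 f3 f4 by (intro conjI)
qed

theorem theorem4:
  fixes I :: "'i set" and S :: "'s set"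
  assumes "\<exists>a\<in>I. \<exists>b\<in>I. a \<noteq> b"
    and "\<exists>x\<in>S. \<exists>y\<in>S. x \<noteq> y"
  shows "(\<forall>(M::'m set) \<Sigma> T \<theta>.
            \<not> weak_universal_inf TYPE((('m + 'i + 's + nat) set) set) I S M \<Sigma> T \<theta>)
       \<and> (\<forall>(M::'k set) T \<theta>.
            \<not> weak_universal_star TYPE((('k + 'i + 's + nat) set) set) I S M T \<theta>)"
proof -
  obtain pa pb where pI: "pa \<in> I" "pb \<in> I" "pa \<noteq> pb" using assms(1) by blast
  obtain s1 s2 where sS: "s1 \<in> S" "s2 \<in> S" "s1 \<noteq> s2" using assms(2) by blast
  have P1: "\<not> weak_universal_inf TYPE((('m + 'i + 's + nat) set) set) I S M Sig T \<theta>"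
    for M :: "'m set" and Sig T \<theta>
  proof
    assume "weak_universal_inf TYPE((('m + 'i + 's + nat) set) set) I S M Sig T \<theta>"
    note wu = this[unfolded weak_universal_inf_def]
    note tgt = conjunct1[OF wu]
    note all = conjunct2[OF wu]
    from well_ordering[where 'a="'m set"] obtain r :: "'m set rel" where r: "Well_order r" "Field r = UNIV"
      by (elim exE conjE)
    interpret WO r using r by unfold_locales
    have src: "inf_type_space I S (UNIV :: ('m + 'i + 's + nat) set set set) UNIV (Ts pa pb r) (th s1 s2)"
      using sS(1,2) by (rule src_inf)
    obtain f where "type_morphism I UNIV UNIV (Ts pa pb r) (th s1 s2) M Sig T \<theta> f"
      using all src by blast
    thus False by (rule no_morph[OF tgt pI sS(3) sS(2)])
  qed
  have P2: "\<not> weak_universal_star TYPE((('k + 'i + 's + nat) set) set) I S M T \<theta>"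
    for M :: "'k set" and T \<theta>
  proof
    assume "weak_universal_star TYPE((('k + 'i + 's + nat) set) set) I S M T \<theta>"
    note wu = this[unfolded weak_universal_star_def]
    note tgt = conjunct1[OF wu]
    note all = conjunct2[OF wu]
    from well_ordering[where 'a="'k set"] obtain r :: "'k set rel" where r: "Well_order r" "Field r = UNIV"
      by (elim exE conjE)
    interpret WO r using r by unfold_locales
    have src: "star_type_space I S (UNIV :: ('k + 'i + 's + nat) set set set) (Ts pa pb r) (th s1 s2)"
      using sS(1,2) by (rule src_star)
    obtain f where "type_morphism I UNIV (Pow UNIV) (Ts pa pb r) (th s1 s2) M (Pow M) T \<theta> f"
      using all src by blast
    hence "type_morphism I UNIV UNIV (Ts pa pb r) (th s1 s2) M (Pow M) T \<theta> f" by simp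
    thus False by (rule no_morph[OF star_inf[OF tgt] pI sS(3) sS(2)])
  qed
  show ?thesis using P1 P2 by blast
qed

end
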